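(* For any $\gamma>0$ and $\Delta>0$ there exists a performative prediction problem (a dimension $d$, a closed convex parameter set $\Theta\subseteq\mathbb{R}^d$, a distribution map $\mathcal{D}(\cdot)$ and a loss $\ell$) such that the loss is $\gamma$-strongly convex in $\theta$, there is a unique performatively stable point $\theta_{\mathrm{PS}}$, this point $\theta_{\mathrm{PS}}$ is a maximizer of the performative risk over $\Theta$, and $\mathrm{PR}(\theta_{\mathrm{PS}})-\min_{\theta\in\Theta}\mathrm{PR}(\theta)\geq \Delta$.
   Context: A performative prediction problem consists of a closed convex set $\Theta\subseteq\mathbb{R}^d$ of model parameters, a distribution map $\mathcal{D}(\cdot)$ assigning to each $\theta\in\Theta$ a probability distribution $\mathcal{D}(\theta)$ over $\mathbb{R}^m$, and a loss function $\ell(z;\theta)$. The performative risk is $\mathrm{PR}(\theta)=\mathbb{E}_{z\sim\mathcal{D}(\theta)}\ell(z;\theta)$. A point $\theta_{\mathrm{PS}}\in\Theta$ is performatively stable if $\theta_{\mathrm{PS}}\in\arg\min_{\theta\in\Theta}\mathbb{E}_{z\sim\mathcal{D}(\theta_{\mathrm{PS}})}\ell(z;\theta)$. The loss is $\gamma$-strongly convex in $\theta$ if for all $\theta,\theta',\theta_0\in\Theta$: $\mathbb{E}_{z\sim\mathcal{D}(\theta_0)}\ell(z;\theta)\geq \mathbb{E}_{z\sim\mathcal{D}(\theta_0)}\ell(z;\theta')+\mathbb{E}_{z\sim\mathcal{D}(\theta_0)}\nabla_\theta\ell(z;\theta')^\top(\theta-\theta')+\frac{\gamma}{2}\|\theta-\theta'\|_2^2$.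 *)

theory Defs
  imports "HOL-Probability.Probability"
begin

text \<open>Performative prediction, instantiated with parameter space and data space the reals
  (d = m = 1). Theta :: real set, D :: real \<Rightarrow> real measure, loss l z theta.\<close>

definition pp_problem :: "real set \<Rightarrow> (real \<Rightarrow> real measure) \<Rightarrow> bool" where
  "pp_problem \<Theta> D \<longleftrightarrow> closed \<Theta> \<and> convex \<Theta> \<and>
     (\<forall>\<theta>\<in>\<Theta>. prob_space (D \<theta>) \<and> sets (D \<theta>) = sets borel)"

definition perf_risk :: "(real \<Rightarrow> real measure) \<Rightarrow> (real \<Rightarrow> real \<Rightarrow> real) \<Rightarrow> real \<Rightarrow> real" where
  "perf_risk D l \<theta> = (\<integral>z. l z \<theta> \<partial>D \<theta>)"

definition perf_stable :: "real set \<Rightarrow> (real \<Rightarrow> real measure) \<Rightarrow> (real \<Rightarrow> real \<Rightarrow> real) \<Rightarrow> real \<Rightarrow> bool" where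
  "perf_stable \<Theta> D l \<theta>ps \<longleftrightarrow> \<theta>ps \<in> \<Theta> \<and>
     (\<forall>\<theta>\<in>\<Theta>. (\<integral>z. l z \<theta>ps \<partial>D \<theta>ps) \<le> (\<integral>z. l z \<theta> \<partial>D \<theta>ps))"

definition strongly_convex_loss :: "real \<Rightarrow> real set \<Rightarrow> (real \<Rightarrow> real measure) \<Rightarrow> (real \<Rightarrow> real \<Rightarrow> real) \<Rightarrow> bool" where
  "strongly_convex_loss \<gamma> \<Theta> D l \<longleftrightarrow>
     (\<exists>g. (\<forall>z. \<forall>\<theta>\<in>\<Theta>. ((\<lambda>t. l z t) has_real_derivative g z \<theta>) (at \<theta>)) \<and>
       (\<forall>\<theta>0\<in>\<Theta>. \<forall>\<theta>\<in>\<Theta>. integrable (D \<theta>0) (\<lambda>z. l z \<theta>) \<and> integrable (D \<theta>0) (\<lambda>z. g z \<theta>)) \<and>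
       (\<forall>\<theta>\<in>\<Theta>. \<forall>\<theta>'\<in>\<Theta>. \<forall>\<theta>0\<in>\<Theta>.
          (\<integral>z. l z \<theta> \<partial>D \<theta>0) \<ge> (\<integral>z. l z \<theta>' \<partial>D \<theta>0) + (\<integral>z. g z \<theta>' \<partial>D \<theta>0) * (\<theta> - \<theta>')
              + \<gamma> / 2 * (\<theta> - \<theta>')\<^sup>2))"

end

theory Submission
  imports Defs
begin

lemma ret_int:
  fixes h :: "real \<Rightarrow> real"
  assumes "continuous_on UNIV h"
  shows "integrable (return borel x) h" "(\<integral>z. h z \<partial>return borel x) = h x"
proof -
  have m: "h \<in> borel_measurable borel" using assms borel_measurable_continuous_onI by blast
  show "(\<integral>z. h z \<partial>return borel x) = h x" by (rule integral_return) (auto simp: m)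
  have "(\<integral>\<^sup>+ z. ennreal (norm (h z)) \<partial>return borel x) = ennreal (norm (h x))"
    by (rule nn_integral_return) (auto intro!: borel_measurable_continuous_onI continuous_intros assms)
  then show "integrable (return borel x) h"
    by (simp add: integrable_iff_bounded m)
qed

theorem proposition2p1:
  fixes \<gamma> \<Delta> :: real
  assumes "\<gamma> > 0" and "\<Delta> > 0"
  shows "\<exists>(\<Theta>::real set) (D::real \<Rightarrow> real measure) (l::real \<Rightarrow> real \<Rightarrow> real).
     pp_problem \<Theta> D \<and> strongly_convex_loss \<gamma> \<Theta> D l \<and>
     (\<exists>!\<theta>ps. perf_stable \<Theta> D l \<theta>ps) \<and>
     (\<forall>\<theta>ps. perf_stable \<Theta> D l \<theta>ps \<longrightarrow>
        (\<forall>\<theta>\<in>\<Theta>. perf_risk D l \<theta> \<le> perf_risk D l \<theta>ps) \<and>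
        (\<exists>\<theta>m\<in>\<Theta>. (\<forall>\<theta>\<in>\<Theta>. perf_risk D l \<theta>m \<le> perf_risk D l \<theta>) \<and>
           perf_risk D l \<theta>ps - perf_risk D l \<theta>m \<ge> \<Delta>))"
proof -
  define K where "K = 3 * \<gamma> + \<Delta>"
  define f where "f = (\<lambda>t::real. if t = 1 then - K else - \<gamma> * t / 2)"
  define D where "D = (\<lambda>t. return borel (f t))"
  define l where "l = (\<lambda>z t::real. \<gamma> / 2 * t\<^sup>2 + z * t)"
  define \<Theta> where "\<Theta> = {0..2::real}"
  have I: "\<And>t x. (\<integral>z. l z t \<partial>D x) = l (f x) t" "\<And>t x. integrable (D x) (\<lambda>z. l z t)"
    unfolding D_def l_def by (rule ret_int; intro continuous_intros)+
  have I2: "\<And>t x. (\<integral>z. \<gamma> * t + z \<partial>D x) = \<gamma> * t + f x" "\<And>t x. integrable (D x) (\<lambda>z. \<gamma> * t + z)"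
    unfolding D_def by (rule ret_int; intro continuous_intros)+
  have pr: "\<And>t. perf_risk D l t = l (f t) t" unfolding perf_risk_def using I by simp
  have pp: "pp_problem \<Theta> D"
    unfolding pp_problem_def \<Theta>_def D_def by (auto intro: prob_space_return)
  have sc: "strongly_convex_loss \<gamma> \<Theta> D l"
    unfolding strongly_convex_loss_def
  proof (intro exI[of _ "\<lambda>z t. \<gamma> * t + z"] conjI ballI allI)
    fix z t
    show "((\<lambda>t. l z t) has_real_derivative \<gamma> * t + z) (at t)"
      unfolding l_def by (auto intro!: derivative_eq_intros simp: power2_eq_square algebra_simps)
  next
    fix a b c
    show "(\<integral>z. l z a \<partial>D c) \<ge> (\<integral>z. l z b \<partial>D c) + (\<integral>z. \<gamma> * b + z \<partial>D c) * (a - b) + \<gamma> / 2 * (a - b)\<^sup>2"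
      unfolding I I2 by (simp add: l_def power2_eq_square algebra_simps)
  qed (use I I2 in auto)
  have stab: "perf_stable \<Theta> D l t \<longleftrightarrow> t = 0" for t
  proof
    assume st: "perf_stable \<Theta> D l t"
    hence tin: "t \<in> \<Theta>" and le: "\<And>s. s \<in> \<Theta> \<Longrightarrow> l (f t) t \<le> l (f t) s"
      unfolding perf_stable_def I by auto
    show "t = 0"
    proof (rule ccontr)
      assume "t \<noteq> 0"
      show False
      proof (cases "t = 1")
        case True
        have "l (f t) t \<le> l (f t) 2" using le[of 2] by (simp add: \<Theta>_def)
        thus False using True assms by (simp add: l_def f_def K_def)
      next
        case False
        have "l (f t) t \<le> l (f t) (t/2)" using le[of "t/2"] tin by (simp add: \<Theta>_def)
        hence "\<gamma> * t\<^sup>2 \<le> 0" using False by (simp add: l_def f_def power2_eq_square algebra_simps)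
        moreover have "\<gamma> * t\<^sup>2 > 0" using \<open>t \<noteq> 0\<close> assms by simp
        ultimately show False by simp
      qed
    qed
  next
    assume "t = 0"
    thus "perf_stable \<Theta> D l t"
      unfolding perf_stable_def I using assms by (auto simp: \<Theta>_def l_def f_def)
  qed
  have prle: "perf_risk D l t \<le> 0" if "t \<in> \<Theta>" for t
  proof (cases "t = 1")
    case True thus ?thesis using assms unfolding pr by (simp add: l_def f_def K_def)
  next
    case False thus ?thesis unfolding pr by (simp add: l_def f_def power2_eq_square)
  qed
  have pr0: "perf_risk D l 0 = 0" unfolding pr by (simp add: l_def f_def)
  have pr1: "perf_risk D l 1 = \<gamma>/2 - K" unfolding pr by (simp add: l_def f_def)
  have prge: "perf_risk D l 1 \<le> perf_risk D l t" if "t \<in> \<Theta>" for t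
  proof (cases "t = 1")
    case True thus ?thesis by simp
  next
    case False thus ?thesis using assms that unfolding pr1 pr by (simp add: l_def f_def K_def power2_eq_square \<Theta>_def)
  qed
  show ?thesis
  proof (intro exI[of _ \<Theta>] exI[of _ D] exI[of _ l] conjI pp sc allI impI ballI)
    show "\<exists>!\<theta>ps. perf_stable \<Theta> D l \<theta>ps" using stab by auto
  next
    fix tp t assume "perf_stable \<Theta> D l tp" "t \<in> \<Theta>"
    thus "perf_risk D l t \<le> perf_risk D l tp" using stab prle pr0 by auto
  next
    fix tp assume "perf_stable \<Theta> D l tp"
    hence "tp = 0" using stab by auto
    show "\<exists>\<theta>m\<in>\<Theta>. (\<forall>\<theta>\<in>\<Theta>. perf_risk D l \<theta>m \<le> perf_risk D l \<theta>) \<and>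
           perf_risk D l tp - perf_risk D l \<theta>m \<ge> \<Delta>"
      by (rule bexI[of _ 1]) (use prge \<open>tp = 0\<close> pr0 pr1 assms in \<open>auto simp: \<Theta>_def K_def\<close>)
  qed
qed

end
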